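(* Let $p$ be a prime, $A=\{0,1,\dots,p-1\}$ viewed as $\mathbb Z_p$, $n\ge3$, and let $\rho\subseteq A^n$ have full pattern and satisfy $$\{(x_1,\dots,x_n)\in A^n:\ x_1+\dots+x_n\equiv0\pmod p\}\subsetneq\rho.$$ Then $\rho=A^n$.
   Context: The pattern of $\rho\subseteq A^n$: for $i\ne j$, $i\overset{\rho}{\sim}j$ iff there do NOT exist $a_1,\dots,a_n,b_i,b_j\in A$ with $(a_1,\dots,a_n)\notin\rho$ while the tuples obtained by replacing $a_i$ by $b_i$, replacing $a_j$ by $b_j$, and replacing both, all lie in $\rho$. The pattern is full if $i\overset{\rho}{\sim}j$ for all $i,j\in\{1,\dots,n\}$. *)

theory Defs
  imports Main "HOL-Computational_Algebra.Primes"
begin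

text \<open>Tuples in A^n are represented as lists of length n; indices are 0-based (0..n-1).\<close>

definition tuples :: "'a set \<Rightarrow> nat \<Rightarrow> 'a list set" where
  "tuples A n = {xs. length xs = n \<and> set xs \<subseteq> A}"

definition pattern_rel :: "'a set \<Rightarrow> nat \<Rightarrow> 'a list set \<Rightarrow> nat \<Rightarrow> nat \<Rightarrow> bool" where
  "pattern_rel A n rho i j \<longleftrightarrow>
     \<not> (\<exists>a \<in> tuples A n. \<exists>bi \<in> A. \<exists>bj \<in> A.
          a \<notin> rho \<and> a[i := bi] \<in> rho \<and> a[j := bj] \<in> rho \<and> a[i := bi, j := bj] \<in> rho)"

definition full_pattern :: "'a set \<Rightarrow> nat \<Rightarrow> 'a list set \<Rightarrow> bool" where
  "full_pattern A n rho \<longleftrightarrow> (\<forall>i<n. \<forall>j<n. i \<noteq> j \<longrightarrow> pattern_rel A n rho i j)"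

end

theory Submission
  imports Defs "HOL-Number_Theory.Cong"
begin

lemma sum_list_upd: "i < length xs \<Longrightarrow> sum_list (xs[i:=v]) + xs!i = sum_list xs + (v::nat)"
proof (induction xs arbitrary: i)
  case Nil then show ?case by simp
next
  case (Cons a xs) then show ?case by (cases i) auto
qed

lemma sum_upd_mod:
  assumes "i < length xs"
  shows "sum_list (xs[i:=(xs!i + d) mod p]) mod p = (sum_list xs + d) mod (p::nat)"
proof -
  have "sum_list (xs[i:=(xs!i + d) mod p]) + xs!i = sum_list xs + (xs!i + d) mod p"
    using sum_list_upd[OF assms] .
  then have "[sum_list (xs[i:=(xs!i + d) mod p]) + xs!i = sum_list xs + d + xs!i] (mod p)"
    by (metis cong_def mod_add_right_eq add.assoc add.commute)
  then show ?thesis using cong_add_rcancel_nat unfolding cong_def by blast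
qed

lemma sum_upd2_mod:
  assumes "i < length xs" "k < length xs" "i \<noteq> k"
  shows "sum_list (xs[i:=(xs!i + a) mod p, k:=(xs!k + b) mod p]) mod p = (sum_list xs + a + b) mod (p::nat)"
proof -
  have "sum_list (xs[i:=(xs!i + a) mod p, k:=(xs!k + b) mod p]) mod p
      = (sum_list (xs[i:=(xs!i + a) mod p]) + b) mod p"
    using sum_upd_mod[of k "xs[i:=(xs!i + a) mod p]" b p] assms by simp
  also have "\<dots> = (sum_list xs + a + b) mod p"
    using sum_upd_mod[of i xs a p] assms by (metis mod_add_left_eq)
  finally show ?thesis .
qed

lemma tuples_upd: "a \<in> tuples A n \<Longrightarrow> v \<in> A \<Longrightarrow> a[i:=v] \<in> tuples A n"
  unfolding tuples_def using set_update_subset_insert by fastforce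

lemma tuples_nth: "a \<in> tuples A n \<Longrightarrow> i < n \<Longrightarrow> a!i \<in> A"
  unfolding tuples_def by auto

lemma solve_mod:
  fixes p u d :: nat
  assumes "prime p" "0 < u" "u < p"
  shows "\<exists>m. (m*u) mod p = d mod p"
proof -
  have "coprime u p" using assms
    by (metis coprime_commute dvd_imp_le not_le prime_imp_coprime)
  then have "gcd u p dvd d" by simp
  then obtain x where "[u*x = d] (mod p)" using cong_solve_dvd_nat by blast
  then show ?thesis unfolding cong_def by (metis mult.commute)
qed

locale setting =
  fixes p n :: nat and rho :: "nat list set"
  assumes pr: "prime p" and n3: "n \<ge> 3"
    and sub: "rho \<subseteq> tuples {0..<p} n"
    and fp: "full_pattern {0..<p} n rho"
    and S: "{xs \<in> tuples {0..<p} n. sum_list xs mod p = 0} \<subseteq> rho"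
begin

lemma p0: "p > 0" using pr prime_gt_0_nat by blast

lemma len: "a \<in> tuples {0..<p} n \<Longrightarrow> length a = n" unfolding tuples_def by auto

lemma corner:
  assumes "a \<in> tuples {0..<p} n" "i < n" "j < n" "i \<noteq> j" "bi < p" "bj < p"
    "a[i:=bi] \<in> rho" "a[j:=bj] \<in> rho" "a[i:=bi, j:=bj] \<in> rho"
  shows "a \<in> rho"
  using fp assms unfolding full_pattern_def pattern_rel_def by fastforce

lemma inS: "a \<in> tuples {0..<p} n \<Longrightarrow> sum_list a mod p = 0 \<Longrightarrow> a \<in> rho"
  by (rule subsetD[OF S]) simp

lemma T:
  assumes x: "x \<in> rho" and ij: "i < n" "j < n" "i \<noteq> j" and d: "(sum_list x + d) mod p = 0"
  shows "x[i:=(x!i+d) mod p, j:=(x!j+d) mod p] \<in> rho"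
proof -
  have xt: "x \<in> tuples {0..<p} n" using x sub by blast
  have lx: "length x = n" using len xt .
  let ?a = "x[i:=(x!i+d) mod p, j:=(x!j+d) mod p]"
  have at: "?a \<in> tuples {0..<p} n" using xt p0 by (intro tuples_upd) auto
  have c1: "?a[i:=x!i] = x[j:=(x!j+d) mod p]" using ij lx
    by (intro nth_equalityI) (auto simp: nth_list_update)
  have c2: "?a[j:=x!j] = x[i:=(x!i+d) mod p]" using ij lx
    by (intro nth_equalityI) (auto simp: nth_list_update)
  have c3: "?a[i:=x!i, j:=x!j] = x" using ij lx
    by (intro nth_equalityI) (auto simp: nth_list_update)
  have r1: "x[j:=(x!j+d) mod p] \<in> rho"
  proof (rule inS)
    show "x[j:=(x!j+d) mod p] \<in> tuples {0..<p} n" using xt p0 by (intro tuples_upd) auto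
    show "sum_list (x[j:=(x!j+d) mod p]) mod p = 0" using sum_upd_mod[of j x d p] lx ij(2) d by simp
  qed
  have r2: "x[i:=(x!i+d) mod p] \<in> rho"
  proof (rule inS)
    show "x[i:=(x!i+d) mod p] \<in> tuples {0..<p} n" using xt p0 by (intro tuples_upd) auto
    show "sum_list (x[i:=(x!i+d) mod p]) mod p = 0" using sum_upd_mod[of i x d p] lx ij(1) d by simp
  qed
  have bi: "x!i < p" "x!j < p" using tuples_nth[OF xt ij(1)] tuples_nth[OF xt ij(2)] by auto
  have r3: "?a[i:=x!i, j:=x!j] \<in> rho" using c3 x by simp
  show ?thesis
    using corner[OF at ij bi] c1 c2 r1 r2 r3 by simp
qed

lemma T2:
  assumes x: "x \<in> rho" and su: "sum_list x mod p = u" and "u < p"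
    and ikj: "i < n" "k < n" "j < n" "i \<noteq> k" "i \<noteq> j" "k \<noteq> j"
  shows "x[i:=(x!i + (p-u)) mod p, k:=(x!k+u) mod p] \<in> rho"
proof -
  have xt: "x \<in> tuples {0..<p} n" using x sub by blast
  have lx: "length x = n" using len xt .
  let ?y = "x[i:=(x!i+(p-u)) mod p, j:=(x!j+(p-u)) mod p]"
  have d1: "(sum_list x + (p-u)) mod p = 0"
  proof -
    have "(sum_list x + (p-u)) mod p = (u + (p-u)) mod p" using su by (metis mod_add_left_eq)
    then show ?thesis using \<open>u<p\<close> by simp
  qed
  have y: "?y \<in> rho" using T[OF x ikj(1,3,5) d1] .
  have sy: "sum_list ?y mod p = (sum_list x + (p-u) + (p-u)) mod p"
    using sum_upd2_mod[where i=i and xs=x and k=j and a="p-u" and b="p-u" and p=p] lx ikj by simp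
  have d2: "(sum_list ?y + u) mod p = 0"
  proof -
    have "(sum_list ?y + u) mod p = (sum_list x + (p-u) + (p-u) + u) mod p" using sy by (metis mod_add_left_eq)
    also have "sum_list x + (p-u) + (p-u) + u = (sum_list x + (p-u)) + p" using \<open>u<p\<close> by simp
    finally show ?thesis using d1 by simp
  qed
  have z: "?y[k:=(?y!k+u) mod p, j:=(?y!j+u) mod p] \<in> rho" using T[OF y ikj(2,3,6) d2] .
  have yk: "?y!k = x!k" using ikj by simp
  have xjp: "x!j < p" using tuples_nth[OF xt ikj(3)] by simp
  have yj: "(?y!j+u) mod p = x!j" using ikj lx \<open>u<p\<close> xjp
    by (simp add: mod_add_left_eq)
  have "?y[k:=(?y!k+u) mod p, j:=(?y!j+u) mod p] = x[i:=(x!i + (p-u)) mod p, k:=(x!k+u) mod p]"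
    unfolding yk yj using ikj lx by (intro nth_equalityI) (auto simp: nth_list_update)
  then show ?thesis using z by simp
qed

lemma Tm:
  assumes x: "x \<in> rho" and su: "sum_list x mod p = u" and up: "u < p"
    and ikj: "i < n" "k < n" "j < n" "i \<noteq> k" "i \<noteq> j" "k \<noteq> j"
  shows "x[i:=(x!i + m*(p-u)) mod p, k:=(x!k+m*u) mod p] \<in> rho"
proof (induction m)
  case 0
  have xt: "x \<in> tuples {0..<p} n" using x sub by blast
  have "x[i:=(x!i + 0*(p-u)) mod p, k:=(x!k+0*u) mod p] = x"
    using tuples_nth[OF xt] ikj by simp
  then show ?case using x by simp
next
  case (Suc m)
  let ?y = "x[i:=(x!i + m*(p-u)) mod p, k:=(x!k+m*u) mod p]"
  have xt: "x \<in> tuples {0..<p} n" using x sub by blast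
  have lx: "length x = n" using len xt .
  have mm: "m*(p-u) + m*u = m*p" using up by (simp add: add_mult_distrib2[symmetric])
  have sy: "sum_list ?y mod p = u"
    using sum_upd2_mod[where i=i and xs=x and k=k and a="m*(p-u)" and b="m*u" and p=p] lx ikj su mm
    by (simp add: add.assoc mod_add_left_eq)
  have z: "?y[i:=(?y!i + (p-u)) mod p, k:=(?y!k+u) mod p] \<in> rho"
    using T2[OF Suc sy up ikj] .
  have "?y[i:=(?y!i + (p-u)) mod p, k:=(?y!k+u) mod p] = x[i:=(x!i + Suc m*(p-u)) mod p, k:=(x!k+Suc m*u) mod p]"
    using ikj lx by (intro nth_equalityI) (auto simp: nth_list_update mod_add_left_eq mod_add_right_eq ac_simps)
  then show ?case using z by simp
qed

lemma mmp: "(u::nat) \<le> p \<Longrightarrow> m*u + m*(p-u) = m*p"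
  by (simp add: add_mult_distrib2[symmetric])

lemma allu:
  assumes c: "c \<in> rho" "sum_list c mod p = u" "0 < u" "u < p"
  shows "w \<in> tuples {0..<p} n \<Longrightarrow> sum_list w mod p = u \<Longrightarrow> w \<in> rho"
proof (induction "card {i. i<n \<and> w!i \<noteq> c!i}" arbitrary: w rule: less_induct)
  case less
  have ct: "c \<in> tuples {0..<p} n" using c sub by blast
  have lc: "length c = n" using len ct .
  have lw: "length w = n" using len less.prems(1) .
  show ?case
  proof (cases "{i. i<n \<and> w!i \<noteq> c!i} = {}")
    case True
    then have "w = c" using lc lw by (intro nth_equalityI) auto
    then show ?thesis using c by simp
  next
    case False
    then obtain i where i: "i < n" "w!i \<noteq> c!i" by blast
    have "\<exists>k. k < n \<and> k \<noteq> i \<and> w!k \<noteq> c!k"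
    proof (rule ccontr)
      assume "\<not> ?thesis"
      then have "w = c[i:=w!i]" using lc lw i by (intro nth_equalityI) (auto simp: nth_list_update)
      then have "sum_list w + c!i = sum_list c + w!i" using sum_list_upd[of i c "w!i"] lc i by simp
      then have "[sum_list w + c!i = sum_list w + w!i] (mod p)"
        using less.prems(2) c(2) unfolding cong_def by (metis mod_add_left_eq)
      then have "[c!i = w!i] (mod p)" using cong_add_lcancel_nat by blast
      moreover have "c!i < p" "w!i < p" using tuples_nth[OF ct i(1)] tuples_nth[OF less.prems(1) i(1)] by auto
      ultimately show False using i unfolding cong_def by simp
    qed
    then obtain k where k: "k < n" "k \<noteq> i" "w!k \<noteq> c!k" by blast
    have "\<exists>j. j < n \<and> j \<noteq> i \<and> j \<noteq> k"
    proof -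
      have "{0,1,2::nat} - {i,k} \<noteq> {}" by auto
      then obtain j where "j \<in> {0,1,2::nat} - {i,k}" by blast
      then show ?thesis using n3 by (intro exI[of _ j]) auto
    qed
    then obtain j where j: "j < n" "j \<noteq> i" "j \<noteq> k" by blast
    obtain m where m: "(m*u) mod p = (c!i + (p - w!i)) mod p"
      using solve_mod[OF pr c(3,4)] by blast
    have wip: "w!i < p" "c!i < p" "w!k < p" using tuples_nth[OF less.prems(1)] tuples_nth[OF ct] i k by auto
    have ci: "(w!i + m*u) mod p = c!i"
    proof -
      have "(w!i + m*u) mod p = (w!i + (c!i + (p - w!i))) mod p" using m by (metis mod_add_right_eq)
      also have "w!i + (c!i + (p - w!i)) = c!i + p" using wip by simp
      finally show ?thesis using wip by simp
    qed
    let ?w' = "w[k:=(w!k + m*(p-u)) mod p, i:=(w!i + m*u) mod p]"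
    have w't: "?w' \<in> tuples {0..<p} n" using less.prems(1) p0 by (intro tuples_upd) auto
    have sw'0: "sum_list ?w' mod p = (sum_list w + m*(p-u) + m*u) mod p"
      using sum_upd2_mod[where i=k and xs=w and k=i and a="m*(p-u)" and b="m*u" and p=p] lw i k by simp
    have sw': "sum_list ?w' mod p = u"
    proof -
      have e0: "sum_list w + m*(p-u) + m*u = sum_list w + m*p"
        using mmp[where u=u and m=m] c(4) by linarith
      have e: "sum_list w + m*(p-u) + m*u = sum_list w + p*m"
        using e0 by (simp add: mult.commute)
      show ?thesis using sw'0 less.prems(2) unfolding e by simp
    qed
    have "{i. i<n \<and> ?w'!i \<noteq> c!i} \<subseteq> {i. i<n \<and> w!i \<noteq> c!i} - {i}"
      using ci lw k i by (auto simp: nth_list_update split: if_splits)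
    then have "card {i. i<n \<and> ?w'!i \<noteq> c!i} < card {i. i<n \<and> w!i \<noteq> c!i}"
      using i by (intro psubset_card_mono) auto
    then have w'r: "?w' \<in> rho" using less.hyps w't sw' by blast
    have z: "?w'[i:=(?w'!i + m*(p-u)) mod p, k:=(?w'!k+m*u) mod p] \<in> rho"
      using Tm[OF w'r sw' c(4) i(1) k(1) j(1)] k(2) j by auto
    have e1: "(c!i + m*(p-u)) mod p = w!i"
    proof -
      have "(c!i + m*(p-u)) mod p = ((w!i + m*u) + m*(p-u)) mod p" using ci by (metis mod_add_left_eq)
      also have "(w!i + m*u) + m*(p-u) = w!i + m*p" using mmp[where u=u and m=m] c(4) by simp
      finally show ?thesis using wip by simp
    qed
    have e2: "((w!k + m*(p-u)) mod p + m*u) mod p = w!k"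
    proof -
      have "((w!k + m*(p-u)) mod p + m*u) mod p = (w!k + m*(p-u) + m*u) mod p"
        by (simp add: mod_add_left_eq)
      also have "w!k + m*(p-u) + m*u = w!k + m*p" using mmp[where u=u and m=m] c(4) by linarith
      also have "(w!k + m*p) mod p = w!k" using wip by simp
      finally show ?thesis .
    qed
    have "?w'[i:=(?w'!i + m*(p-u)) mod p, k:=(?w'!k+m*u) mod p] = w"
      using lw i k e1 e2 ci by (intro nth_equalityI) (auto simp: nth_list_update)
    then show ?thesis using z by simp
  qed
qed

definition Rs :: "nat \<Rightarrow> bool" where
  "Rs s \<longleftrightarrow> (\<forall>w\<in>tuples {0..<p} n. sum_list w mod p = s mod p \<longrightarrow> w \<in> rho)"

lemma H: "(x::nat) mod p = (s + y) mod p \<Longrightarrow> (x + (p - y mod p)) mod p = s mod p"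
proof -
  assume a: "x mod p = (s + y) mod p"
  have "(x + (p - y mod p)) mod p = (s + y + (p - y mod p)) mod p" using a by (metis mod_add_left_eq)
  also have "s + y + (p - y mod p) = s + p*(y div p) + p"
  proof -
    have "y mod p \<le> p" using p0 by (simp add: less_imp_le_nat)
    moreover have "y = y mod p + p*(y div p)" by simp
    ultimately show ?thesis by linarith
  qed
  finally show ?thesis by simp
qed

lemma Radd:
  assumes "Rs s1" "Rs s2" shows "Rs (s1+s2)"
  unfolding Rs_def
proof (intro ballI impI)
  fix a assume at: "a \<in> tuples {0..<p} n" and sa: "sum_list a mod p = (s1+s2) mod p"
  have la: "length a = n" using len at .
  have n01: "0 < n" "1 < n" using n3 by auto
  let ?bi = "(a!0 + (p - s2 mod p)) mod p" and ?bj = "(a!1 + (p - s1 mod p)) mod p"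
  have r1: "a[0:=?bi] \<in> rho"
  proof -
    have "sum_list (a[0:=?bi]) mod p = (sum_list a + (p - s2 mod p)) mod p"
      using sum_upd_mod[of 0 a] la n01 by simp
    also have "\<dots> = s1 mod p" using H sa by blast
    finally have "sum_list (a[0:=?bi]) mod p = s1 mod p" .
    moreover have "a[0:=?bi] \<in> tuples {0..<p} n" using at p0 by (intro tuples_upd) auto
    ultimately show ?thesis using assms(1) unfolding Rs_def by blast
  qed
  have r2: "a[1:=?bj] \<in> rho"
  proof -
    have "sum_list (a[1:=?bj]) mod p = (sum_list a + (p - s1 mod p)) mod p"
      using sum_upd_mod[of 1 a] la n01 by simp
    also have "\<dots> = s2 mod p" using H sa by (simp add: add.commute)
    finally have "sum_list (a[1:=?bj]) mod p = s2 mod p" .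
    moreover have "a[1:=?bj] \<in> tuples {0..<p} n" using at p0 by (intro tuples_upd) auto
    ultimately show ?thesis using assms(2) unfolding Rs_def by blast
  qed
  have r3: "a[0:=?bi, 1:=?bj] \<in> rho"
  proof -
    have "sum_list (a[0:=?bi, 1:=?bj]) mod p = (sum_list a + (p - s2 mod p) + (p - s1 mod p)) mod p"
      using sum_upd2_mod[where i=0 and xs=a and k=1 and a="p - s2 mod p" and b="p - s1 mod p" and p=p] la n01 by simp
    also have "\<dots> = 0 mod p"
      using H[of "sum_list a + (p - s2 mod p)" 0 s1] H[of "sum_list a" s1 s2] sa by simp
    finally show ?thesis using at p0 by (auto intro!: inS tuples_upd)
  qed
  show "a \<in> rho" by (rule corner[OF at n01 _ _ _ r1 r2 r3]) (use p0 in auto)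
qed

end

theorem mainTheorem17:
  fixes p n :: nat and rho :: "nat list set"
  assumes "prime p" and "n \<ge> 3"
    and "rho \<subseteq> tuples {0..<p} n"
    and "full_pattern {0..<p} n rho"
    and "{xs \<in> tuples {0..<p} n. sum_list xs mod p = 0} \<subset> rho"
  shows "rho = tuples {0..<p} n"
proof -
  interpret setting p n rho using assms by unfold_locales auto
  obtain c where c: "c \<in> rho" "c \<notin> {xs \<in> tuples {0..<p} n. sum_list xs mod p = 0}"
    using assms(5) by blast
  have ct: "c \<in> tuples {0..<p} n" using c assms(3) by blast
  define u where "u = sum_list c mod p"
  have u0: "0 < u" using c ct u_def by auto
  have up: "u < p" using u_def p0 by simp
  have Ru: "Rs u" unfolding Rs_def using allu[OF c(1) u_def[symmetric] u0 up] up by simp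
  have R0: "Rs 0" unfolding Rs_def using inS by simp
  have Rm: "Rs (m*u)" for m
  proof (induction m)
    case 0 then show ?case using R0 by simp
  next
    case (Suc m) then show ?case using Radd[OF Suc Ru] by (simp add: add.commute)
  qed
  show ?thesis
  proof
    show "tuples {0..<p} n \<subseteq> rho"
    proof
      fix w assume w: "w \<in> tuples {0..<p} n"
      obtain m where "(m*u) mod p = sum_list w mod p" using solve_mod[OF assms(1) u0 up] by blast
      then show "w \<in> rho" using Rm[of m] w unfolding Rs_def by simp
    qed
  qed (use assms(3) in blast)
qed

end
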